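(* Let $X$ be a separable absolutely strongly star-Menger space. If $Y$ is a closed and discrete subset of $X$, then $|Y|<\mathfrak{d}$.
   Context: All spaces are regular. $St(A,\mathcal{U})=\bigcup\{U\in\mathcal{U}:U\cap A\neq\emptyset\}$. $\mathfrak{d}$ is the dominating number. $X$ is absolutely strongly star-Menger if for each sequence $(\mathcal{U}_n:n\in\omega)$ of open covers and each dense subset $D$ of $X$ there are finite sets $F_n\subseteq D$ ($n\in\omega$) such that $\{St(F_n,\mathcal{U}_n):n\in\omega\}$ covers $X$. *)

theory Defs
  imports "HOL-Analysis.Analysis" "HOL-Library.Equipollence"
begin

definition St :: "'a set \<Rightarrow> 'a set set \<Rightarrow> 'a set" where
  "St A \<U> = \<Union>{U \<in> \<U>. U \<inter> A \<noteq> {}}"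

definition open_cover :: "'a topology \<Rightarrow> 'a set set \<Rightarrow> bool" where
  "open_cover X \<U> \<longleftrightarrow> (\<forall>U\<in>\<U>. openin X U) \<and> \<Union>\<U> = topspace X"

definition abs_strongly_star_Menger :: "'a topology \<Rightarrow> bool" where
  "abs_strongly_star_Menger X \<longleftrightarrow>
     (\<forall>\<U> :: nat \<Rightarrow> 'a set set. \<forall>D.
        (\<forall>n. open_cover X (\<U> n)) \<and> D \<subseteq> topspace X \<and> X closure_of D = topspace X
        \<longrightarrow> (\<exists>F :: nat \<Rightarrow> 'a set. (\<forall>n. finite (F n) \<and> F n \<subseteq> D) \<and>
                  topspace X \<subseteq> (\<Union>n. St (F n) (\<U> n))))"

definition eventually_le :: "(nat \<Rightarrow> nat) \<Rightarrow> (nat \<Rightarrow> nat) \<Rightarrow> bool" where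
  "eventually_le f g \<longleftrightarrow> (\<forall>\<^sub>F n in sequentially. f n \<le> g n)"

definition dominating :: "(nat \<Rightarrow> nat) set \<Rightarrow> bool" where
  "dominating \<F> \<longleftrightarrow> (\<forall>f. \<exists>g\<in>\<F>. eventually_le f g)"

text \<open>|Y| < \<d>: Y is strictly smaller than every dominating family
  (equivalent to |Y| < min{|F| : F dominating}, cardinals being well-ordered).\<close>
definition card_less_dominating :: "'a set \<Rightarrow> bool" where
  "card_less_dominating Y \<longleftrightarrow> (\<forall>\<F>. dominating \<F> \<longrightarrow> Y \<prec> \<F>)"

end

theory Submission
  imports Defs
begin

lemma fin_bound:
  assumes "finite S" "S \<subseteq> range (d::nat \<Rightarrow> 'a)"
  shows "\<exists>b. S \<subseteq> d ` {..b}"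
  using assms
proof (induction S rule: finite_induct)
  case empty then show ?case by auto
next
  case (insert x S)
  then obtain b where b: "S \<subseteq> d ` {..b}" by auto
  from insert obtain j where j: "x = d j" by auto
  have "insert x S \<subseteq> d ` {..max b j}"
    using b j by fastforce
  then show ?case by blast
qed

lemma core:
  assumes t1: "t1_space X" and sep: "separable_space X"
    and ssm: "abs_strongly_star_Menger X"
    and cl: "closedin X Y" and disc: "subtopology X Y = discrete_topology Y"
    and dom: "\<And>G. \<exists>y\<in>Y. \<forall>\<^sub>F n in sequentially. G n \<le> (fy::_ \<Rightarrow> nat \<Rightarrow> nat) y n"
  shows False
proof -
  obtain C where C: "countable C" "C \<subseteq> topspace X" "X closure_of C = topspace X"
    using sep unfolding separable_space_def by blast
  have YX: "Y \<subseteq> topspace X" using cl closedin_subset by blast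
  have Cne: "C \<noteq> {}"
  proof
    assume "C = {}"
    then have "topspace X = {}" using C by simp
    then have "Y = {}" using YX by blast
    then show False using dom[of "\<lambda>_. 0"] by blast
  qed
  define d where "d = from_nat_into C"
  have drange: "range d = C" unfolding d_def using C(1) Cne by (simp add: range_from_nat_into)
  have "\<forall>y\<in>Y. \<exists>W. openin X W \<and> W \<inter> Y = {y}"
  proof
    fix y assume y: "y \<in> Y"
    have "openin (subtopology X Y) {y}" using disc y by simp
    then obtain T where "openin X T" "{y} = T \<inter> Y" by (auto simp: openin_subtopology)
    then show "\<exists>W. openin X W \<and> W \<inter> Y = {y}" by blast
  qed
  then obtain W where W: "\<And>y. y\<in>Y \<Longrightarrow> openin X (W y) \<and> W y \<inter> Y = {y}" by metis
  define V where "V y n = W y - (d ` {..fy y n} - {y})" for y n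
  define U where "U n = insert (topspace X - Y) ((\<lambda>y. V y n) ` Y)" for n
  have dX: "d ` A \<subseteq> topspace X" for A using drange C(2) by blast
  have Vopen: "openin X (V y n)" if "y \<in> Y" for y n
  proof -
    have "finite (d ` {..fy y n} - {y})" by simp
    moreover have "d ` {..fy y n} - {y} \<subseteq> topspace X" using dX by blast
    ultimately have "closedin X (d ` {..fy y n} - {y})"
      using t1_space_closedin_finite[THEN iffD1, OF t1, rule_format] by blast
    then show ?thesis unfolding V_def using W[OF that] by (simp add: openin_diff)
  qed
  have yV: "y \<in> V y n" if "y \<in> Y" for y n using W[OF that] unfolding V_def by blast
  have VY: "V y n \<inter> Y = {y}" if "y \<in> Y" for y n using W[OF that] yV[OF that] unfolding V_def by blast
  have cov: "open_cover X (U n)" for n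
    unfolding open_cover_def
  proof
    show "\<forall>Ua\<in>U n. openin X Ua" unfolding U_def using Vopen cl by auto
    show "\<Union> (U n) = topspace X"
    proof
      show "\<Union> (U n) \<subseteq> topspace X" unfolding U_def using Vopen openin_subset by blast
      show "topspace X \<subseteq> \<Union> (U n)"
      proof
        fix x assume "x \<in> topspace X"
        then show "x \<in> \<Union> (U n)"
          using yV unfolding U_def by (cases "x \<in> Y") auto
      qed
    qed
  qed
  have "\<forall>k. \<exists>Fs. (\<forall>n. finite (Fs n) \<and> Fs n \<subseteq> C) \<and> topspace X \<subseteq> (\<Union>n. St (Fs n) (U (n+k)))"
  proof
    fix k
    have "\<forall>n. open_cover X (U (n+k))" using cov by blast
    then show "\<exists>Fs. (\<forall>n. finite (Fs n) \<and> Fs n \<subseteq> C) \<and> topspace X \<subseteq> (\<Union>n. St (Fs n) (U (n+k)))"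
      using ssm[unfolded abs_strongly_star_Menger_def, rule_format, of "\<lambda>n. U (n+k)" C] C by blast
  qed
  then have "\<exists>FF. \<forall>k. (\<forall>n. finite (FF k n) \<and> FF k n \<subseteq> C) \<and> topspace X \<subseteq> (\<Union>n. St (FF k n) (U (n+k)))"
    by (rule choice)
  then obtain FF where FF0: "\<forall>k. (\<forall>n. finite (FF k n) \<and> FF k n \<subseteq> C) \<and> topspace X \<subseteq> (\<Union>n. St (FF k n) (U (n+k)))"
    by blast
  have FF: "\<And>k n. finite (FF k n) \<and> FF k n \<subseteq> C" using FF0 by blast
  have FFc: "\<And>k. topspace X \<subseteq> (\<Union>n. St (FF k n) (U (n+k)))" using FF0 by blast
  define ix where "ix S = (SOME b. S \<subseteq> d ` {..b})" for S
  have ixp: "S \<subseteq> d ` {..ix S}" if "finite S" "S \<subseteq> C" for S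
    unfolding ix_def by (rule someI_ex) (use fin_bound[of S d] that drange in auto)
  define G where "G n = (\<Sum>k\<le>n. ix (FF k (n-k))) + (\<Sum>j\<le>n. if d j \<in> Y then fy (d j) n else 0) + 1" for n
  obtain y where y: "y \<in> Y" and ev: "\<forall>\<^sub>F n in sequentially. G n \<le> fy y n" using dom by blast
  then obtain N where N: "\<And>n. n \<ge> N \<Longrightarrow> G n \<le> fy y n" by (auto simp: eventually_sequentially)
  have notC: "y \<notin> C"
  proof
    assume "y \<in> C"
    then obtain j where j: "y = d j" using drange by blast
    define n where "n = max j N"
    have "(if d j \<in> Y then fy (d j) n else 0) \<le> (\<Sum>j\<le>n. if d j \<in> Y then fy (d j) n else 0)"
      by (rule member_le_sum) (auto simp: n_def)
    then have "fy y n + 1 \<le> G n" using j y unfolding G_def by simp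
    moreover have "G n \<le> fy y n" using N by (simp add: n_def)
    ultimately show False by simp
  qed
  have "y \<in> topspace X" using y YX by blast
  then obtain m where "y \<in> St (FF N m) (U (m+N))" using FFc[of N] by blast
  then obtain Uu where Uu: "Uu \<in> U (m+N)" "Uu \<inter> FF N m \<noteq> {}" "y \<in> Uu"
    unfolding St_def by blast
  define n where "n = m + N"
  then obtain y' where y': "y' \<in> Y" "Uu = V y' n" using Uu y unfolding U_def by auto
  have "y \<in> V y' n \<inter> Y" using y' Uu y by simp
  then have "y' = y" using VY[OF y'(1), of n] by simp
  then obtain z where z: "z \<in> V y n" "z \<in> FF N m" using Uu y' by blast
  have "ix (FF N (n-N)) \<le> (\<Sum>k\<le>n. ix (FF k (n-k)))"
    by (rule member_le_sum[of N]) (auto simp: n_def)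
  then have "ix (FF N m) \<le> fy y n" using N[of n] unfolding G_def n_def by simp
  moreover have "z \<in> d ` {..ix (FF N m)}" using ixp FF z by blast
  ultimately have "z \<in> d ` {..fy y n}" by auto
  then have "z = y" using z unfolding V_def by blast
  then show False using z FF notC by blast
qed

lemma lepoll_tot: "(A::'a set) \<lesssim> (B::'b set) \<or> B \<lesssim> A"
  by (metis card_of_Well_order card_of_ordLeq lepoll_def ordLeq_total)

theorem mainTheorem9:
  fixes X :: "'a topology" and Y :: "'a set"
  assumes "regular_space X" and "t1_space X"
    and "separable_space X"
    and "abs_strongly_star_Menger X"
    and "closedin X Y"
    and "subtopology X Y = discrete_topology Y"
  shows "card_less_dominating Y"
  unfolding card_less_dominating_def
proof (intro allI impI)
  fix F :: "(nat \<Rightarrow> nat) set"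
  assume dF: "dominating F"
  show "Y \<prec> F"
  proof (rule ccontr)
    assume nl: "\<not> Y \<prec> F"
    have "F \<lesssim> Y"
      using nl lepoll_tot[of Y F] unfolding lesspoll_def
      by (meson eqpoll_sym eqpoll_imp_lepoll)
    then obtain i where i: "inj_on i F" "i ` F \<subseteq> Y" unfolding lepoll_def by blast
    define fy where "fy y = inv_into F i y" for y
    have "\<exists>y\<in>Y. \<forall>\<^sub>F n in sequentially. G n \<le> fy y n" for G
    proof -
      obtain g where g: "g \<in> F" "eventually_le G g" using dF unfolding dominating_def by blast
      have "fy (i g) = g" unfolding fy_def using i g by simp
      then show ?thesis using g i unfolding eventually_le_def by (metis image_subset_iff)
    qed
    then show False using core[OF assms(2-6)] by blast
  qed
qed

end
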